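(* Let $L$ be a frame (a complete lattice in which $a\wedge\bigvee_i b_i=\bigvee_i(a\wedge b_i)$ for all $a$ and all families $(b_i)$), with least element $0$ and greatest element $1$, and let $\tau$ be a topology on the set $L$ all of whose open sets are upper-closed with respect to the order of $L$. Define $\Phi:\tau\to L$ by \[\Phi(U)=\bigvee\{\alpha\in L \mid \exists\beta\in U:\ \alpha\wedge\beta=0\}.\] Then $\Phi$ is a homomorphism of frames: $\Phi(L)=1$, $\Phi(U\cap V)=\Phi(U)\wedge\Phi(V)$ for all $U,V\in\tau$, and $\Phi\bigl(\bigcup_i U_i\bigr)=\bigvee_i\Phi(U_i)$ for every family $(U_i)$ in $\tau$.
   Context: $\tau$ is ordered by inclusion, so it is itself a frame with finite meets given by intersections and arbitrary joins given by unions. *)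

theory Defs
  imports "HOL-Analysis.Analysis"
begin

definition is_frame :: "('a::complete_lattice) itself \<Rightarrow> bool" where
  "is_frame _ \<longleftrightarrow> (\<forall>(a::'a) (B::'a set). inf a (Sup B) = Sup ((\<lambda>b. inf a b) ` B))"

definition Phi :: "('a::complete_lattice) set \<Rightarrow> 'a" where
  "Phi U = Sup {\<alpha>. \<exists>\<beta>\<in>U. inf \<alpha> \<beta> = bot}"

end

theory Submission
  imports Defs
begin

lemma frame_dist: "is_frame TYPE('a::complete_lattice) \<Longrightarrow> inf (a::'a) (Sup B) = Sup ((\<lambda>b. inf a b) ` B)"
  unfolding is_frame_def by blast

lemma frame_bin: "is_frame TYPE('a::complete_lattice) \<Longrightarrow> inf (a::'a) (sup u v) = sup (inf a u) (inf a v)"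
  using frame_dist[of a "{u,v}"] by simp

theorem mainTheorem3:
  fixes T :: "('a::complete_lattice) topology"
  assumes frame: "is_frame TYPE('a)"
    and top: "topspace T = UNIV"
    and upper: "\<And>U x y. openin T U \<Longrightarrow> x \<in> U \<Longrightarrow> x \<le> y \<Longrightarrow> y \<in> U"
  shows "Phi (UNIV :: 'a set) = top
    \<and> (\<forall>U V. openin T U \<and> openin T V \<longrightarrow> Phi (U \<inter> V) = inf (Phi U) (Phi V))
    \<and> (\<forall>(I :: 'i set) (U :: 'i \<Rightarrow> 'a set). (\<forall>i\<in>I. openin T (U i))
           \<longrightarrow> Phi (\<Union>i\<in>I. U i) = (SUP i\<in>I. Phi (U i)))"
proof (intro conjI allI impI)
  have "{\<alpha>::'a. \<exists>\<beta>\<in>UNIV. inf \<alpha> \<beta> = bot} = UNIV" by (auto intro: exI[of _ bot])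
  then show "Phi (UNIV :: 'a set) = top" unfolding Phi_def by simp
next
  fix U V :: "'a set"
  assume UV: "openin T U \<and> openin T V"
  have mono: "Phi X \<le> Phi Y" if "X \<subseteq> Y" for X Y :: "'a set"
    unfolding Phi_def using that by (intro Sup_subset_mono) auto
  show "Phi (U \<inter> V) = inf (Phi U) (Phi V)"
  proof (rule antisym)
    show "Phi (U \<inter> V) \<le> inf (Phi U) (Phi V)" using mono by simp
  next
    let ?A = "{\<alpha>. \<exists>\<beta>\<in>U. inf \<alpha> \<beta> = bot}"
    let ?B = "{\<alpha>. \<exists>\<beta>\<in>V. inf \<alpha> \<beta> = bot}"
    have key: "inf b a \<le> Phi (U \<inter> V)" if ha: "a \<in> ?A" and hb: "b \<in> ?B" for a b
    proof -
      obtain u where u: "u \<in> U" "inf a u = bot" using ha by blast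
      obtain v where v: "v \<in> V" "inf b v = bot" using hb by blast
      have w: "sup u v \<in> U \<inter> V" proof -
        have "sup u v \<in> U" using upper[of U u "sup u v"] UV u by simp
        moreover have "sup u v \<in> V" using upper[of V v "sup u v"] UV v by simp
        ultimately show ?thesis by blast
      qed
      have "inf (inf b a) (sup u v) = sup (inf (inf b a) u) (inf (inf b a) v)"
        using frame_bin[OF frame] by blast
      also have "inf (inf b a) u = bot" using u by (simp add: inf.assoc)
      also have "inf (inf b a) v = bot" proof -
        have "inf (inf b a) v = inf a (inf b v)" by (simp add: ac_simps)
        then show ?thesis using v by simp
      qed
      finally have "inf (inf b a) (sup u v) = bot" by simp
      then show ?thesis unfolding Phi_def using w by (intro Sup_upper) blast
    qed
    have "inf (Phi U) (Phi V) = Sup ((\<lambda>b. inf (Phi U) b) ` ?B)"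
      unfolding Phi_def[of V] by (rule frame_dist[OF frame])
    also have "\<dots> \<le> Phi (U \<inter> V)"
    proof (rule SUP_least)
      fix b assume b: "b \<in> ?B"
      have "inf (Phi U) b = inf b (Phi U)" by (simp add: inf.commute)
      also have "\<dots> = Sup ((\<lambda>a. inf b a) ` ?A)"
        unfolding Phi_def[of U] by (rule frame_dist[OF frame])
      also have "\<dots> \<le> Phi (U \<inter> V)"
        using key b by (intro Sup_least) blast
      finally show "inf (Phi U) b \<le> Phi (U \<inter> V)" .
    qed
    finally show "inf (Phi U) (Phi V) \<le> Phi (U \<inter> V)" .
  qed
next
  fix I :: "'i set" and U :: "'i \<Rightarrow> 'a set"
  have "{\<alpha>. \<exists>\<beta>\<in>(\<Union>i\<in>I. U i). inf \<alpha> \<beta> = bot} = (\<Union>i\<in>I. {\<alpha>. \<exists>\<beta>\<in>U i. inf \<alpha> \<beta> = bot})"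
    by auto
  then show "Phi (\<Union>i\<in>I. U i) = (SUP i\<in>I. Phi (U i))"
    unfolding Phi_def using SUP_UNION[where f="\<lambda>x. x" and A=I and g="\<lambda>i. {\<alpha>. \<exists>\<beta>\<in>U i. inf \<alpha> \<beta> = bot}"] by simp
qed

end
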